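(* Let $\kappa$ be an infinite cardinal, $\alpha^*$ an ordinal, and $\bar A=\langle A_\alpha:\alpha<\alpha^*\rangle$ a sequence of subsets of $\kappa$ such that for each $\alpha<\alpha^*$, $A_\alpha$ does not belong to the ideal of subsets of $\kappa$ generated by $\{A_\beta:\beta<\alpha\}$. If $\mathrm{rk}_{\bar A}(\kappa)\ge\kappa^+$, then there is a sequence $\langle\alpha_n:n<\omega\rangle$ with $\alpha_n<\alpha_{n+1}<\kappa$ for all $n$, such that for every $\ell<k<\omega$ there is $\alpha<\alpha^*$ with $$A_\alpha\cap\{\alpha_\ell,\alpha_{\ell+1},\dots,\alpha_k\}=\{\alpha_{\ell+1},\dots,\alpha_k\}.$$
   Context: The rank $\mathrm{rk}_{\bar A}$ is the function from subsets of $\kappa$ to ordinals or $\infty$ defined by: $\mathrm{rk}_{\bar A}(A)\ge 0$ always, and $\mathrm{rk}_{\bar A}(A)\ge\zeta$ iff for every $\xi<\zeta$ there is $\alpha<\alpha^*$ such that $A\neq A\cap A_\alpha$ (i.e. $A\not\subseteq A_\alpha$) and $\mathrm{rk}_{\bar A}(A\cap A_\alpha)\ge\xi$. $\mathrm{rk}_{\bar A}(A)$ is the largest $\zeta$ with $\mathrm{rk}_{\bar A}(A)\ge\zeta$, or $\infty$ if it is $\ge\zeta$ for all ordinals $\zeta$. *)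

theory Defs
  imports Main
begin

text \<open>Ordinals are represented by well-order relations (as in HOL's BNF cardinal library).
  The index ordinal alpha* is a well-order s with index set Field s; the sequence is
  A :: 'i => 'k set.  An ordinal xi below the order type of a well-order W is represented
  by an element of Field W (the order type of its initial segment).\<close>

text \<open>rank_ge I A W X xi : rk(X) >= xi, where xi in Field W.\<close>
inductive rank_ge :: "'i set \<Rightarrow> ('i \<Rightarrow> 'k set) \<Rightarrow> 'o rel \<Rightarrow> 'k set \<Rightarrow> 'o \<Rightarrow> bool"
  for I A W where
  "\<lbrakk> \<xi> \<in> Field W;
     \<forall>\<eta>. (\<eta>, \<xi>) \<in> W \<and> \<eta> \<noteq> \<xi> \<longrightarrow>
        (\<exists>\<alpha>\<in>I. \<not> X \<subseteq> A \<alpha> \<and> rank_ge I A W (X \<inter> A \<alpha>) \<eta>) \<rbrakk>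
   \<Longrightarrow> rank_ge I A W X \<xi>"

definition rank_ge_otype :: "'i set \<Rightarrow> ('i \<Rightarrow> 'k set) \<Rightarrow> 'o rel \<Rightarrow> 'k set \<Rightarrow> bool" where
  "rank_ge_otype I A W X \<longleftrightarrow>
     (\<forall>\<xi>\<in>Field W. \<exists>\<alpha>\<in>I. \<not> X \<subseteq> A \<alpha> \<and> rank_ge I A W (X \<inter> A \<alpha>) \<xi>)"

definition in_gen_ideal :: "'k set \<Rightarrow> 'k set set \<Rightarrow> 'k set \<Rightarrow> bool" where
  "in_gen_ideal K F B \<longleftrightarrow> B \<subseteq> K \<and> (\<exists>G. finite G \<and> G \<subseteq> F \<and> B \<subseteq> \<Union>G)"

end

theory Submission
  imports Defs
begin

unbundle cardinal_syntax

lemma wo_total: "Well_order W \<Longrightarrow> a \<in> Field W \<Longrightarrow> b \<in> Field W \<Longrightarrow> (a,b)\<in>W \<or> (b,a)\<in>W"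
  using wo_rel.TOTALS[of W] unfolding wo_rel_def by blast

lemma wo_trans: "Well_order W \<Longrightarrow> (a,b)\<in>W \<Longrightarrow> (b,c)\<in>W \<Longrightarrow> (a,c)\<in>W"
  using wo_rel.TRANS[of W] unfolding wo_rel_def trans_def by blast

lemma pigeon_cardSuc:
  fixes r :: "'k rel" and g :: "'k set \<Rightarrow> 'k"
  assumes r: "Card_order r" and inf: "\<not> finite (Field r)"
    and g: "\<forall>\<xi>\<in>Field (cardSuc r). g \<xi> \<in> Field r"
  shows "\<exists>y. \<forall>\<eta>\<in>Field (cardSuc r). \<exists>\<xi>\<in>Field (cardSuc r).
           g \<xi> = y \<and> (\<eta>, \<xi>) \<in> cardSuc r \<and> \<eta> \<noteq> \<xi>"
proof (rule ccontr)
  let ?W = "cardSuc r"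
  assume nt: "\<not> ?thesis"
  have "\<forall>y. \<exists>\<eta>. \<eta> \<in> Field ?W \<and> (\<forall>\<xi>\<in>Field ?W. g \<xi> = y \<longrightarrow> \<not> ((\<eta>, \<xi>) \<in> ?W \<and> \<eta> \<noteq> \<xi>))"
  proof
    fix y
    have "\<not> (\<forall>\<eta>\<in>Field ?W. \<exists>\<xi>\<in>Field ?W. g \<xi> = y \<and> (\<eta>, \<xi>) \<in> ?W \<and> \<eta> \<noteq> \<xi>)"
    proof
      assume "\<forall>\<eta>\<in>Field ?W. \<exists>\<xi>\<in>Field ?W. g \<xi> = y \<and> (\<eta>, \<xi>) \<in> ?W \<and> \<eta> \<noteq> \<xi>"
      hence "\<exists>y. \<forall>\<eta>\<in>Field ?W. \<exists>\<xi>\<in>Field ?W. g \<xi> = y \<and> (\<eta>, \<xi>) \<in> ?W \<and> \<eta> \<noteq> \<xi>" by (rule exI)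
      with nt show False by contradiction
    qed
    then show "\<exists>\<eta>. \<eta> \<in> Field ?W \<and> (\<forall>\<xi>\<in>Field ?W. g \<xi> = y \<longrightarrow> \<not> ((\<eta>, \<xi>) \<in> ?W \<and> \<eta> \<noteq> \<xi>))"
      by auto
  qed
  from choice[OF this] obtain b where
    b: "\<forall>y. b y \<in> Field ?W \<and> (\<forall>\<xi>\<in>Field ?W. g \<xi> = y \<longrightarrow> \<not> ((b y, \<xi>) \<in> ?W \<and> b y \<noteq> \<xi>))"
    by (elim exE)
  have WC: "Card_order ?W" using r by (rule cardSuc_Card_order)
  have WO: "Well_order ?W" using r by (rule cardSuc_Well_order)
  let ?K = "b ` Field r"
  have c1: "|?K| \<le>o |Field r|" by (rule card_of_image)
  have c2: "|Field r| =o r" using r by (rule card_of_Field_ordIso)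
  have c3: "r <o ?W" using r by (rule cardSuc_greater)
  have "|?K| <o ?W"
    by (rule ordLeq_ordLess_trans[OF c1 ordIso_ordLess_trans[OF c2 c3]])
  hence "\<not> |?K| =o ?W" by (rule not_ordLess_ordIso)
  moreover have "?K \<subseteq> Field ?W" using b by auto
  moreover have reg: "regularCard ?W" using inf r by (rule infinite_cardSuc_regularCard)
  ultimately have "\<not> cofinal ?K ?W" unfolding regularCard_def by blast
  then obtain a where a: "a \<in> Field ?W" "\<forall>k\<in>?K. \<not> (a \<noteq> k \<and> (a, k) \<in> ?W)"
    unfolding cofinal_def by blast
  have infW: "\<not> finite (Field ?W)" using cardSuc_finite[OF r] inf by blast
  have "Field ?W \<noteq> under ?W a"
    using Card_order_infinite_not_under[OF WC infW] by blast
  moreover have "under ?W a \<subseteq> Field ?W" unfolding under_def Field_def by blast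
  ultimately obtain \<xi> where xi: "\<xi> \<in> Field ?W" "\<xi> \<notin> under ?W a" by blast
  have xia: "(\<xi>, a) \<notin> ?W" using xi(2) unfolding under_def by blast
  define y where "y = g \<xi>"
  have yF: "y \<in> Field r" using g xi(1) unfolding y_def by blast
  have by1: "b y \<in> Field ?W" using b by blast
  have "\<not> ((b y, \<xi>) \<in> ?W \<and> b y \<noteq> \<xi>)" using b xi(1) unfolding y_def by blast
  hence 1: "(\<xi>, b y) \<in> ?W"
    using wo_total[OF WO xi(1) by1] by blast
  have "b y \<in> ?K" using yF by blast
  hence "\<not> (a \<noteq> b y \<and> (a, b y) \<in> ?W)" using a(2) by blast
  hence 2: "(b y, a) \<in> ?W"
    using wo_total[OF WO a(1) by1] by blast
  from wo_trans[OF WO 1 2] xia show False by blast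
qed

lemma dep_seq:
  assumes "P 0 x0"
    and step: "\<And>n x. P n x \<Longrightarrow> \<exists>y. P (Suc n) (x(n:=y))"
    and cong: "\<And>n x x'. (\<forall>i<n. x i = x' i) \<Longrightarrow> P n x \<Longrightarrow> P n x'"
  shows "\<exists>a. \<forall>n. P n a"
proof -
  define xs where "xs = rec_nat x0 (\<lambda>n x. x(n := SOME y. P (Suc n) (x(n:=y))))"
  have xs0: "xs 0 = x0" and xsS: "\<And>n. xs (Suc n) = (xs n)(n := SOME y. P (Suc n) ((xs n)(n:=y)))"
    unfolding xs_def by auto
  have Pn: "P n (xs n)" for n
  proof (induction n)
    case 0 then show ?case using assms(1) xs0 by simp
  next
    case (Suc n)
    then have "\<exists>y. P (Suc n) ((xs n)(n:=y))" by (rule step)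
    then show ?case unfolding xsS by (rule someI_ex)
  qed
  have stab: "i < m \<Longrightarrow> xs m i = xs (Suc i) i" for i m
  proof (induction m)
    case 0 then show ?case by simp
  next
    case (Suc m)
    then show ?case by (cases "i = m") (auto simp: xsS)
  qed
  define a where "a i = xs (Suc i) i" for i
  have "P n a" for n
  proof (rule cong[OF _ Pn[of n]], intro allI impI)
    fix i assume "i < n"
    then have "xs n i = xs (Suc i) i" by (rule stab)
    then show "xs n i = a i" unfolding a_def .
  qed
  then show ?thesis by blast
qed

lemma incr_subseq:
  fixes x :: "nat \<Rightarrow> 'k"
  assumes wo: "Well_order r" and xF: "\<forall>n. x n \<in> Field r"
  shows "\<exists>f. strict_mono f \<and> (\<forall>n. (x (f n), x (f (Suc n))) \<in> r)"
proof -
  have lin: "Refl r" "total_on (Field r) r"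
    using wo unfolding order_on_defs by auto
  have wf: "wf (r - Id)" using wo unfolding well_order_on_def by auto
  have ex: "\<exists>m. m \<ge> j \<and> (\<forall>m'\<ge>j. (x m, x m') \<in> r)" for j
  proof -
    have "x j \<in> x ` {j..}" by auto
    then obtain z where z: "z \<in> x ` {j..}" "\<forall>y. (y, z) \<in> r - Id \<longrightarrow> y \<notin> x ` {j..}"
      using wf unfolding wf_eq_minimal by metis
    then obtain m where m: "m \<ge> j" "z = x m" by auto
    have "(x m, x m') \<in> r" if "m' \<ge> j" for m'
    proof -
      have "\<not> ((x m', x m) \<in> r \<and> x m' \<noteq> x m)" using z m that by auto
      then show ?thesis using lin xF unfolding total_on_def refl_on_def by metis
    qed
    then show ?thesis using m by blast
  qed
  define g where "g j = (SOME m. m \<ge> j \<and> (\<forall>m'\<ge>j. (x m, x m') \<in> r))" for j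
  have g: "g j \<ge> j" "\<And>m'. m' \<ge> j \<Longrightarrow> (x (g j), x m') \<in> r" for j
    using someI_ex[OF ex[of j]] unfolding g_def by auto
  define f where "f = rec_nat (g 0) (\<lambda>_ p. g (Suc p))"
  have f0: "f 0 = g 0" and fS: "\<And>n. f (Suc n) = g (Suc (f n))" unfolding f_def by auto
  have lt: "f n < f (Suc n)" for n using g(1)[of "Suc (f n)"] fS by auto
  have sm: "strict_mono f" using lt by (simp add: strict_mono_Suc_iff)
  have "(x (f n), x (f (Suc n))) \<in> r" for n
  proof (cases n)
    case 0 then show ?thesis using g(2)[of 0] f0 by auto
  next
    case (Suc p)
    have "f (Suc n) \<ge> Suc (f p)" using lt[of n] lt[of p] Suc by auto
    then show ?thesis using g(2)[of "Suc (f p)"] fS Suc by auto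
  qed
  then show ?thesis using sm by blast
qed

theorem claim2p3:
  fixes r :: "'k rel" and s :: "'i rel" and A :: "'i \<Rightarrow> 'k set"
  assumes kappa_card: "Card_order r"
    and kappa_inf: "\<not> finite (Field r)"
    and s_wo: "Well_order s"
    and A_sub: "\<forall>\<alpha>\<in>Field s. A \<alpha> \<subseteq> Field r"
    and A_indep: "\<forall>\<alpha>\<in>Field s.
        \<not> in_gen_ideal (Field r) (A ` {\<beta>. (\<beta>, \<alpha>) \<in> s \<and> \<beta> \<noteq> \<alpha>}) (A \<alpha>)"
    and rank: "rank_ge_otype (Field s) A (cardSuc r) (Field r)"
  shows "\<exists>a :: nat \<Rightarrow> 'k. (\<forall>n. a n \<in> Field r \<and> (a n, a (Suc n)) \<in> r \<and> a n \<noteq> a (Suc n)) \<and>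
           (\<forall>l k. l < k \<longrightarrow> (\<exists>\<alpha>\<in>Field s. A \<alpha> \<inter> a ` {l..k} = a ` {l<..k}))"
proof -
  let ?W = "cardSuc r"
  let ?I = "Field s"
  define XX where "XX \<beta> n = Field r \<inter> (\<Inter>j\<in>{..<n}. A (\<beta> j))" for \<beta> :: "nat \<Rightarrow> 'i" and n
  define G where "G n x \<longleftrightarrow> (\<forall>\<xi>\<in>Field ?W. \<exists>\<beta>.
      (\<forall>i<n. \<beta> i \<in> ?I \<and> x i \<in> XX \<beta> i \<and> x i \<notin> A (\<beta> i)) \<and>
      (\<exists>\<alpha>\<in>?I. \<not> XX \<beta> n \<subseteq> A \<alpha> \<and> rank_ge ?I A ?W (XX \<beta> n \<inter> A \<alpha>) \<xi>))"
    for n and x :: "nat \<Rightarrow> 'k"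
  have XX0: "XX \<beta> 0 = Field r" for \<beta> unfolding XX_def by auto
  have XXS: "XX \<beta> (Suc n) = XX \<beta> n \<inter> A (\<beta> n)" for \<beta> n
    unfolding XX_def lessThan_Suc by auto
  have XXcong: "(\<forall>i<n. \<beta> i = \<beta>' i) \<Longrightarrow> XX \<beta> n = XX \<beta>' n" for \<beta> \<beta>' n
    unfolding XX_def by auto
  have G0: "G 0 x" for x
    using rank unfolding G_def rank_ge_otype_def XX0 by auto
  have Gcong: "(\<forall>i<n. x i = x' i) \<Longrightarrow> G n x \<Longrightarrow> G n x'" for n x x'
    unfolding G_def by simp
  have Gstep: "\<exists>y. G (Suc n) (x(n:=y))" if Gn: "G n x" for n x
  proof -
    have "\<forall>\<xi>\<in>Field ?W. \<exists>\<beta> \<alpha> p. (\<forall>i<n. \<beta> i \<in> ?I \<and> x i \<in> XX \<beta> i \<and> x i \<notin> A (\<beta> i)) \<and>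
        \<alpha> \<in> ?I \<and> p \<in> XX \<beta> n \<and> p \<notin> A \<alpha> \<and> rank_ge ?I A ?W (XX \<beta> n \<inter> A \<alpha>) \<xi>"
      using Gn unfolding G_def by blast
    then obtain \<beta> \<alpha> p where bap: "\<And>\<xi>. \<xi> \<in> Field ?W \<Longrightarrow>
        (\<forall>i<n. \<beta> \<xi> i \<in> ?I \<and> x i \<in> XX (\<beta> \<xi>) i \<and> x i \<notin> A (\<beta> \<xi> i)) \<and>
        \<alpha> \<xi> \<in> ?I \<and> p \<xi> \<in> XX (\<beta> \<xi>) n \<and> p \<xi> \<notin> A (\<alpha> \<xi>) \<and>
        rank_ge ?I A ?W (XX (\<beta> \<xi>) n \<inter> A (\<alpha> \<xi>)) \<xi>"
      by metis
    have XXF: "XX \<beta>0 m \<subseteq> Field r" for \<beta>0 m unfolding XX_def by auto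
    have "\<forall>\<xi>\<in>Field ?W. p \<xi> \<in> Field r" using bap XXF by (meson subsetD)
    from pigeon_cardSuc[OF kappa_card kappa_inf this]
    obtain y where y: "\<forall>\<eta>\<in>Field ?W. \<exists>\<xi>\<in>Field ?W. p \<xi> = y \<and> (\<eta>, \<xi>) \<in> ?W \<and> \<eta> \<noteq> \<xi>"
      by (elim exE)
    have "G (Suc n) (x(n:=y))"
      unfolding G_def
    proof
      fix \<eta> assume eta: "\<eta> \<in> Field ?W"
      then obtain \<xi> where xi: "\<xi> \<in> Field ?W" "p \<xi> = y" "(\<eta>, \<xi>) \<in> ?W" "\<eta> \<noteq> \<xi>"
        using y by blast
      define \<beta>' where "\<beta>' = (\<beta> \<xi>)(n := \<alpha> \<xi>)"
      have XXb: "XX \<beta>' i = XX (\<beta> \<xi>) i" if "i \<le> n" for i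
        using XXcong[of i \<beta>' "\<beta> \<xi>"] that unfolding \<beta>'_def by auto
      have XXb2: "XX \<beta>' (Suc n) = XX (\<beta> \<xi>) n \<inter> A (\<alpha> \<xi>)"
        unfolding XXS XXb[OF order_refl] by (simp add: \<beta>'_def)
      have rk: "rank_ge ?I A ?W (XX (\<beta> \<xi>) n \<inter> A (\<alpha> \<xi>)) \<xi>" using bap xi(1) by blast
      have "\<exists>\<alpha>'\<in>?I. \<not> XX \<beta>' (Suc n) \<subseteq> A \<alpha>' \<and> rank_ge ?I A ?W (XX \<beta>' (Suc n) \<inter> A \<alpha>') \<eta>"
        using rk xi(3,4) unfolding XXb2 by (cases rule: rank_ge.cases) auto
      moreover have "\<forall>i<Suc n. \<beta>' i \<in> ?I \<and> (x(n:=y)) i \<in> XX \<beta>' i \<and> (x(n:=y)) i \<notin> A (\<beta>' i)"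
      proof (intro allI impI)
        fix i assume "i < Suc n"
        then consider "i < n" | "i = n" by linarith
        then show "\<beta>' i \<in> ?I \<and> (x(n:=y)) i \<in> XX \<beta>' i \<and> (x(n:=y)) i \<notin> A (\<beta>' i)"
        proof cases
          case 1 then show ?thesis using bap[OF xi(1)] XXb[of i] unfolding \<beta>'_def by auto
        next
          case 2 then show ?thesis using bap[OF xi(1)] XXb[of n] xi(2) unfolding \<beta>'_def by auto
        qed
      qed
      ultimately show "\<exists>\<beta>. (\<forall>i<Suc n. \<beta> i \<in> ?I \<and> (x(n:=y)) i \<in> XX \<beta> i \<and> (x(n:=y)) i \<notin> A (\<beta> i)) \<and>
          (\<exists>\<alpha>\<in>?I. \<not> XX \<beta> (Suc n) \<subseteq> A \<alpha> \<and> rank_ge ?I A ?W (XX \<beta> (Suc n) \<inter> A \<alpha>) \<eta>)"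
        by blast
    qed
    then show ?thesis by blast
  qed
  have "\<exists>a. \<forall>n. G n a"
    by (rule dep_seq[of G "\<lambda>_. undefined"]) (rule G0, erule Gstep, erule (1) Gcong)
  then obtain a where aG: "\<And>n. G n a" by blast
  obtain \<xi>0 where xi0: "\<xi>0 \<in> Field ?W" using Field_cardSuc_not_empty[OF kappa_card] by blast
  have key: "\<exists>\<beta>. (\<forall>i<n. \<beta> i \<in> ?I \<and> a i \<in> XX \<beta> i \<and> a i \<notin> A (\<beta> i))" for n
    using aG[of n] xi0 unfolding G_def by blast
  have XXmono: "j \<le> i \<Longrightarrow> XX \<beta> i \<subseteq> XX \<beta> j" for \<beta> i j unfolding XX_def by auto
  have XXA: "l < j \<Longrightarrow> XX \<beta> j \<subseteq> A (\<beta> l)" for \<beta> l j unfolding XX_def by auto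
  have XXF': "XX \<beta>0 m \<subseteq> Field r" for \<beta>0 m unfolding XX_def by auto
  have aF: "a n \<in> Field r" for n
  proof -
    obtain \<beta> where "\<forall>i<Suc n. \<beta> i \<in> ?I \<and> a i \<in> XX \<beta> i \<and> a i \<notin> A (\<beta> i)"
      using key[of "Suc n"] by (elim exE)
    then have "a n \<in> XX \<beta> n" by simp
    then show ?thesis using XXF' by blast
  qed
  have K: "\<exists>\<gamma>\<in>?I. a l \<notin> A \<gamma> \<and> (\<forall>j. l < j \<and> j \<le> k \<longrightarrow> a j \<in> A \<gamma>)" if "l < k" for l k
  proof -
    obtain \<beta> where b: "\<forall>i<Suc k. \<beta> i \<in> ?I \<and> a i \<in> XX \<beta> i \<and> a i \<notin> A (\<beta> i)"
      using key[of "Suc k"] by (elim exE)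
    have "\<forall>j. l < j \<and> j \<le> k \<longrightarrow> a j \<in> A (\<beta> l)"
    proof (intro allI impI)
      fix j assume j: "l < j \<and> j \<le> k"
      then have "a j \<in> XX \<beta> j" using b by simp
      then show "a j \<in> A (\<beta> l)" using XXA[of l j \<beta>] j by blast
    qed
    then show ?thesis using b that by (intro bexI[of _ "\<beta> l"]) auto
  qed
  have ainj: "a l \<noteq> a k" if lk: "l < k" for l k
  proof -
    obtain \<gamma> where "a l \<notin> A \<gamma>" "\<forall>j. l < j \<and> j \<le> k \<longrightarrow> a j \<in> A \<gamma>"
      using K[OF lk] by (elim bexE conjE)
    then have "a l \<notin> A \<gamma>" "a k \<in> A \<gamma>" using lk by auto
    then show ?thesis by metis
  qed
  have wor: "Well_order r" using kappa_card by (rule card_order_on_well_order_on)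
  have aFall: "\<forall>n. a n \<in> Field r" using aF by blast
  from incr_subseq[OF wor aFall]
  obtain f where f: "strict_mono f" "\<forall>n. (a (f n), a (f (Suc n))) \<in> r"
    by (elim exE conjE)
  define b where "b = a \<circ> f"
  have "b n \<in> Field r \<and> (b n, b (Suc n)) \<in> r \<and> b n \<noteq> b (Suc n)" for n
  proof -
    have "f n < f (Suc n)" using f(1) by (simp add: strict_mono_Suc_iff)
    then have "a (f n) \<noteq> a (f (Suc n))" by (rule ainj)
    then show ?thesis using aF f(2) unfolding b_def by simp
  qed
  then have P1: "\<forall>n. b n \<in> Field r \<and> (b n, b (Suc n)) \<in> r \<and> b n \<noteq> b (Suc n)" by blast
  have P2: "\<exists>\<alpha>\<in>Field s. A \<alpha> \<inter> b ` {l..k} = b ` {l<..k}" if lk: "l < k" for l k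
  proof -
    have flk: "f l < f k" using f(1) lk by (simp add: strict_mono_less)
    obtain \<gamma> where g: "\<gamma> \<in> ?I" "a (f l) \<notin> A \<gamma>" "\<forall>j. f l < j \<and> j \<le> f k \<longrightarrow> a j \<in> A \<gamma>"
      using K[OF flk] by (elim bexE conjE) 
    have sub1: "A \<gamma> \<inter> b ` {l..k} \<subseteq> b ` {l<..k}"
    proof
      fix z assume z: "z \<in> A \<gamma> \<inter> b ` {l..k}"
      then obtain i where i: "l \<le> i" "i \<le> k" "z = b i" by auto
      have "i \<noteq> l"
      proof
        assume "i = l"
        then have "z = a (f l)" using i(3) unfolding b_def by simp
        then show False using z g(2) by simp
      qed
      then show "z \<in> b ` {l<..k}" using i by auto
    qed
    have sub2: "b ` {l<..k} \<subseteq> A \<gamma> \<inter> b ` {l..k}"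
    proof
      fix z assume "z \<in> b ` {l<..k}"
      then obtain i where i: "l < i" "i \<le> k" "z = b i" by auto
      have "f l < f i" using f(1) i(1) by (simp add: strict_mono_less)
      moreover have "f i \<le> f k" using f(1) i(2) by (simp add: strict_mono_less_eq)
      ultimately have "a (f i) \<in> A \<gamma>" using g(3) by blast
      then show "z \<in> A \<gamma> \<inter> b ` {l..k}" using i unfolding b_def by auto
    qed
    from sub1 sub2 have "A \<gamma> \<inter> b ` {l..k} = b ` {l<..k}" by (rule subset_antisym)
    then show ?thesis by (rule bexI[OF _ g(1)])
  qed
  show ?thesis
  proof (rule exI[of _ b], rule conjI)
    show "\<forall>n. b n \<in> Field r \<and> (b n, b (Suc n)) \<in> r \<and> b n \<noteq> b (Suc n)" by (rule P1)
  next
    show "\<forall>l k. l < k \<longrightarrow> (\<exists>\<alpha>\<in>Field s. A \<alpha> \<inter> b ` {l..k} = b ` {l<..k})"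
    proof (intro allI impI)
    fix l k :: nat assume "l < k"
    then show "\<exists>\<alpha>\<in>Field s. A \<alpha> \<inter> b ` {l..k} = b ` {l<..k}" by (rule P2)
    qed
  qed
qed

end
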